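(* Let $G$ be a connected graph, let $\delta$ be a real with $0<\delta<3/2$, and let $T$ be a nice shortest $\delta$-tour in $G$ that stops at at least $3$ points. Then $G$ admits a vertex cover of size at most $\ell(T)/s_\delta+1$.
   Context: Continuous graph model: for a connected simple graph $G$, each edge $uv$ is viewed as a unit-length interval whose endpoints are the vertices $u,v$. $P(G)$ is the set of all points $p(u,v,\lambda)$ for $uv\in E(G)$, $\lambda\in[0,1]$, where $p(u,v,\lambda)=p(v,u,1-\lambda)$, $p(u,v,0)=u$, $p(u,v,1)=v$. A walk is a finite sequence of points $(p_0,\dots,p_z)$ in which any two consecutive points are distinct and lie on a common edge $uv$, say $p_{i-1}=p(u,v,\lambda)$, $p_i=p(u,v,\mu)$; this step has length $|\lambda-\mu|$ and covers all points of that edge between them. The length $\ell$ of a walk is the sum of the lengths of its steps; $d(p,q)$ is the minimum length of a walk from $p$ to $q$. A tour is a walk $T=(p_0,\dots,p_z)$ with $p_0=p_z$; the points $p_0,\dots,p_z$ are its stopping points, and the points of the tour are all points covered by its steps. For $\delta\ge 0$, a $\delta$-tour is a tour $T$ such that every $p\in P(G)$ has distance at most $\delta$ from some point of $T$; a shortest $\delta$-tour is one of minimum length. $T$ traverses an edge $uv$ if $(u,v)$ or $(v,u)$ occurs as a pair of consecutive stopping points. A tour $T=(p_0,\dots,p_z)$ with $z\ge 3$ is nice if: (a) for every $i\in[z]$, at least one of $p_{i-1},p_i$ is a vertex; (b) for every $i\in[z]$ with $p_i$ not a vertex, $p_{i-1}=p_{(i+1)\bmod z}$; (c) for every edge $uv$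 there is at most one $i\in[z]$ with $p_i=p(u,v,\lambda)$ for some $\lambda\in(0,1)$; (d) if $T$ traverses $uv$, there is no $i$ with $p_i=p(u,v,\lambda)$, $\lambda\in(0,1)$; (e) every edge is traversed at most twice by $T$. $S_\delta=\{0,\ \delta-\lfloor\delta\rfloor,\ \tfrac12+\delta-\lfloor\tfrac12+\delta\rfloor,\ 2\delta-\lfloor2\delta\rfloor\}$ and $s_\delta=\min\{|s_1-s_2| : \{s_i,1-s_i\}\cap S_\delta\ne\emptyset\text{ for } i=1,2,\ s_1\notin\{s_2,1-s_2\}\}$. *)

theory Defs
  imports Complex_Main
begin

definition simple_graph :: "'a set \<Rightarrow> 'a set set \<Rightarrow> bool" where
  "simple_graph V E \<longleftrightarrow> finite V \<and>
     (\<forall>e\<in>E. \<exists>u v. e = {u, v} \<and> u \<noteq> v \<and> u \<in> V \<and> v \<in> V)"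

definition connected_graph :: "'a set \<Rightarrow> 'a set set \<Rightarrow> bool" where
  "connected_graph V E \<longleftrightarrow> V \<noteq> {} \<and>
     (\<forall>u\<in>V. \<forall>v\<in>V. (u, v) \<in> {(x, y). {x, y} \<in> E}\<^sup>*)"

definition vertex_cover :: "'a set \<Rightarrow> 'a set set \<Rightarrow> 'a set \<Rightarrow> bool" where
  "vertex_cover V E C \<longleftrightarrow> C \<subseteq> V \<and> (\<forall>e\<in>E. e \<inter> C \<noteq> {})"

text \<open>Points: a vertex, or an interior point of an edge, stored canonically as
  Mid u v l with u < v and 0 < l < 1 (meaning p(u,v,l)).\<close>
datatype 'a point = Vtx 'a | Mid 'a 'a real

definition pt :: "'a::linorder \<Rightarrow> 'a \<Rightarrow> real \<Rightarrow> 'a point" where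
  "pt u v l = (if l = 0 then Vtx u else if l = 1 then Vtx v
               else if u < v then Mid u v l else Mid v u (1 - l))"

definition points :: "'a::linorder set set \<Rightarrow> 'a point set" where
  "points E = {pt u v l | u v l. {u, v} \<in> E \<and> 0 \<le> l \<and> l \<le> 1}"

definition is_vertex :: "'a point \<Rightarrow> bool" where
  "is_vertex p \<longleftrightarrow> (\<exists>v. p = Vtx v)"

definition interior_pt :: "'a::linorder \<Rightarrow> 'a \<Rightarrow> 'a point \<Rightarrow> bool" where
  "interior_pt u v p \<longleftrightarrow> (\<exists>l. 0 < l \<and> l < 1 \<and> p = pt u v l)"

definition on_edge :: "'a::linorder set set \<Rightarrow> 'a point \<Rightarrow> 'a point \<Rightarrow> 'a \<Rightarrow> 'a \<Rightarrow> real \<Rightarrow> real \<Rightarrow> bool" where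
  "on_edge E p q u v l m \<longleftrightarrow> {u, v} \<in> E \<and> 0 \<le> l \<and> l \<le> 1 \<and> 0 \<le> m \<and> m \<le> 1
      \<and> p = pt u v l \<and> q = pt u v m"

definition step_ok :: "'a::linorder set set \<Rightarrow> 'a point \<Rightarrow> 'a point \<Rightarrow> bool" where
  "step_ok E p q \<longleftrightarrow> p \<noteq> q \<and> (\<exists>u v l m. on_edge E p q u v l m)"

text \<open>Length of a step (well defined for simple graphs).\<close>
definition step_len :: "'a::linorder set set \<Rightarrow> 'a point \<Rightarrow> 'a point \<Rightarrow> real" where
  "step_len E p q = (THE d. \<exists>u v l m. on_edge E p q u v l m \<and> d = \<bar>l - m\<bar>)"

definition step_cover :: "'a::linorder set set \<Rightarrow> 'a point \<Rightarrow> 'a point \<Rightarrow> 'a point set" where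
  "step_cover E p q = {r. \<exists>u v l m t. on_edge E p q u v l m \<and> min l m \<le> t \<and> t \<le> max l m
                              \<and> r = pt u v t}"

text \<open>A walk (p_0,...,p_z) is a nonempty list; z = length - 1.\<close>
definition walk :: "'a::linorder set set \<Rightarrow> 'a point list \<Rightarrow> bool" where
  "walk E ps \<longleftrightarrow> ps \<noteq> [] \<and> set ps \<subseteq> points E \<and>
     (\<forall>i < length ps - 1. step_ok E (ps ! i) (ps ! Suc i))"

definition wlen :: "'a::linorder set set \<Rightarrow> 'a point list \<Rightarrow> real" where
  "wlen E ps = (\<Sum>i < length ps - 1. step_len E (ps ! i) (ps ! Suc i))"

definition gdist :: "'a::linorder set set \<Rightarrow> 'a point \<Rightarrow> 'a point \<Rightarrow> real" where
  "gdist E p q = Inf {wlen E ps | ps. walk E ps \<and> hd ps = p \<and> last ps = q}"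

definition tour :: "'a::linorder set set \<Rightarrow> 'a point list \<Rightarrow> bool" where
  "tour E ps \<longleftrightarrow> walk E ps \<and> hd ps = last ps"

definition tour_points :: "'a::linorder set set \<Rightarrow> 'a point list \<Rightarrow> 'a point set" where
  "tour_points E ps = set ps \<union> (\<Union>i \<in> {..< length ps - 1}. step_cover E (ps ! i) (ps ! Suc i))"

definition delta_tour :: "'a::linorder set set \<Rightarrow> real \<Rightarrow> 'a point list \<Rightarrow> bool" where
  "delta_tour E \<delta> ps \<longleftrightarrow> tour E ps \<and>
     (\<forall>p \<in> points E. \<exists>q \<in> tour_points E ps. gdist E p q \<le> \<delta>)"

definition shortest_delta_tour :: "'a::linorder set set \<Rightarrow> real \<Rightarrow> 'a point list \<Rightarrow> bool" where
  "shortest_delta_tour E \<delta> ps \<longleftrightarrow> delta_tour E \<delta> ps \<and>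
     (\<forall>qs. delta_tour E \<delta> qs \<longrightarrow> wlen E ps \<le> wlen E qs)"

definition trav_count :: "'a point list \<Rightarrow> 'a \<Rightarrow> 'a \<Rightarrow> nat" where
  "trav_count ps u v = card {i \<in> {1..length ps - 1}.
      (ps ! (i - 1), ps ! i) = (Vtx u, Vtx v) \<or> (ps ! (i - 1), ps ! i) = (Vtx v, Vtx u)}"

definition traverses :: "'a point list \<Rightarrow> 'a \<Rightarrow> 'a \<Rightarrow> bool" where
  "traverses ps u v \<longleftrightarrow> trav_count ps u v > 0"

definition nice :: "'a::linorder set set \<Rightarrow> 'a point list \<Rightarrow> bool" where
  "nice E ps \<longleftrightarrow> tour E ps \<and> (let z = length ps - 1 in
      z \<ge> 3
    \<and> (\<forall>i \<in> {1..z}. is_vertex (ps ! (i - 1)) \<or> is_vertex (ps ! i))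
    \<and> (\<forall>i \<in> {1..z}. \<not> is_vertex (ps ! i) \<longrightarrow> ps ! (i - 1) = ps ! ((i + 1) mod z))
    \<and> (\<forall>u v. {u, v} \<in> E \<longrightarrow> card {i \<in> {1..z}. interior_pt u v (ps ! i)} \<le> 1)
    \<and> (\<forall>u v. {u, v} \<in> E \<longrightarrow> traverses ps u v \<longrightarrow> (\<forall>i \<le> z. \<not> interior_pt u v (ps ! i)))
    \<and> (\<forall>u v. {u, v} \<in> E \<longrightarrow> trav_count ps u v \<le> 2))"

definition frac_part :: "real \<Rightarrow> real" where
  "frac_part x = x - real_of_int \<lfloor>x\<rfloor>"

definition S_delta :: "real \<Rightarrow> real set" where
  "S_delta \<delta> = {0, frac_part \<delta>, frac_part (1/2 + \<delta>), frac_part (2 * \<delta>)}"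

definition s_delta :: "real \<Rightarrow> real" where
  "s_delta \<delta> = Inf {\<bar>s1 - s2\<bar> | s1 s2.
      {s1, 1 - s1} \<inter> S_delta \<delta> \<noteq> {} \<and> {s2, 1 - s2} \<inter> S_delta \<delta> \<noteq> {}
      \<and> s1 \<notin> {s2, 1 - s2}}"

end

theory Submission
  imports Defs
begin


lemma pt_sym: "u \<noteq> v \<Longrightarrow> pt v u l = pt u v (1 - l)"
  unfolding pt_def by auto

lemma pt_vertex: "pt u v l = Vtx w \<Longrightarrow> (l = 0 \<and> w = u) \<or> (l = 1 \<and> w = v)"
  unfolding pt_def by (auto split: if_splits)

lemma pt_is_vertex: "is_vertex (pt u v l) \<longleftrightarrow> l = 0 \<or> l = 1"
  unfolding pt_def is_vertex_def by auto

lemma pt_interior_eq: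
  assumes "u \<noteq> v" "x \<noteq> y" "0 < \<mu>" "\<mu> < 1" "pt u v m = pt x y \<mu>"
  shows "(u = x \<and> v = y \<and> m = \<mu>) \<or> (u = y \<and> v = x \<and> m = 1 - \<mu>)"
  using assms unfolding pt_def by (auto split: if_splits simp: not_less_iff_gr_or_eq)

lemma pt_inj: "u \<noteq> v \<Longrightarrow> pt u v l = pt u v m \<Longrightarrow> l = m"
  unfolding pt_def by (auto split: if_splits)



lemma edge_neq: assumes "simple_graph V E" "{u, v} \<in> E" shows "u \<noteq> v"
proof -
  obtain x y where "{u, v} = {x, y}" "x \<noteq> y" using assms unfolding simple_graph_def by blast
  then show ?thesis by (auto simp: doubleton_eq_iff)
qed

lemma edge_in_V: assumes "simple_graph V E" "{u, v} \<in> E" shows "u \<in> V \<and> v \<in> V"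
proof -
  obtain x y where "{u, v} = {x, y}" "x \<in> V" "y \<in> V" using assms unfolding simple_graph_def by blast
  then show ?thesis by (auto simp: doubleton_eq_iff)
qed

lemma on_edge_swap: "on_edge E p q u v l m \<Longrightarrow> u \<noteq> v \<Longrightarrow> on_edge E p q v u (1 - l) (1 - m)"
proof -
  assume a: "on_edge E p q u v l m" "u \<noteq> v"
  have "{v, u} = {u, v}" by blast
  then show ?thesis using a pt_sym[OF a(2), of "1 - l"] pt_sym[OF a(2), of "1 - m"] unfolding on_edge_def by auto
qed

lemma step_len_eq:
  assumes sg: "simple_graph V E" and oe: "on_edge E p q u v l m" and ne: "p \<noteq> q"
  shows "step_len E p q = \<bar>l - m\<bar>"
  unfolding step_len_def
proof (rule the_equality)
  show "\<exists>u v l' m'. on_edge E p q u v l' m' \<and> \<bar>l - m\<bar> = \<bar>l' - m'\<bar>" using oe by blast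
next
  fix d assume "\<exists>u' v' l' m'. on_edge E p q u' v' l' m' \<and> d = \<bar>l' - m'\<bar>"
  then obtain u' v' l' m' where oe': "on_edge E p q u' v' l' m'" and d: "d = \<bar>l' - m'\<bar>" by blast
  have "{u, v} \<in> E" using oe unfolding on_edge_def by simp
  then have uv: "u \<noteq> v" by (rule edge_neq[OF sg])
  have "{u', v'} \<in> E" using oe' unfolding on_edge_def by simp
  then have uv': "u' \<noteq> v'" by (rule edge_neq[OF sg])
  have p1: "p = pt u v l" "q = pt u v m" "0 \<le> l" "l \<le> 1" "0 \<le> m" "m \<le> 1" using oe unfolding on_edge_def by auto
  have p2: "p = pt u' v' l'" "q = pt u' v' m'" "0 \<le> l'" "l' \<le> 1" "0 \<le> m'" "m' \<le> 1" using oe' unfolding on_edge_def by auto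
  show "d = \<bar>l - m\<bar>"
  proof (cases "0 < l \<and> l < 1")
    case True
    have "pt u' v' l' = pt u v l" using p1 p2 by simp
    moreover have "0 < l" "l < 1" using True by auto
    ultimately have "(u' = u \<and> v' = v \<and> l' = l) \<or> (u' = v \<and> v' = u \<and> l' = 1 - l)"
      using pt_interior_eq[OF uv' uv] by presburger
    then show ?thesis
    proof
      assume h: "u' = u \<and> v' = v \<and> l' = l"
      then have "m' = m" using pt_inj[OF uv] p1 p2 by metis
      then show ?thesis using h d by simp
    next
      assume h: "u' = v \<and> v' = u \<and> l' = 1 - l"
      then have "pt u v m = pt u v (1 - m')" using p1 p2 pt_sym[OF uv] by metis
      then have "m = 1 - m'" using pt_inj[OF uv] by metis
      then show ?thesis using h d by simp
    qed
  next
    case lF: False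
    show ?thesis
    proof (cases "0 < m \<and> m < 1")
      case True
      have "pt u' v' m' = pt u v m" using p1 p2 by simp
      moreover have "0 < m" "m < 1" using True by auto
      ultimately have "(u' = u \<and> v' = v \<and> m' = m) \<or> (u' = v \<and> v' = u \<and> m' = 1 - m)"
        using pt_interior_eq[OF uv' uv] by presburger
      then show ?thesis
      proof
        assume h: "u' = u \<and> v' = v \<and> m' = m"
        then have "l' = l" using pt_inj[OF uv] p1 p2 by metis
        then show ?thesis using h d by simp
      next
        assume h: "u' = v \<and> v' = u \<and> m' = 1 - m"
        then have "pt u v l = pt u v (1 - l')" using p1 p2 pt_sym[OF uv] by metis
        then have "l = 1 - l'" using pt_inj[OF uv] by metis
        then show ?thesis using h d by simp
      qed
    next
      case mF: False
      have l01: "l = 0 \<or> l = 1" and m01: "m = 0 \<or> m = 1" using lF mF p1 by auto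
      have "is_vertex p" "is_vertex q" using l01 m01 p1 pt_is_vertex by auto
      then have "l' = 0 \<or> l' = 1" "m' = 0 \<or> m' = 1" using p2 pt_is_vertex by auto
      moreover have "l \<noteq> m" using ne p1 by auto
      moreover have "l' \<noteq> m'" using ne p2 by auto
      ultimately show ?thesis using l01 m01 d by auto
    qed
  qed
qed

definition fF :: "'a \<Rightarrow> 'a \<Rightarrow> 'a \<Rightarrow> 'a \<Rightarrow> real \<Rightarrow> real" where
  "fF a b u v t = (if {u, v} = {a, b} then \<bar>t - 1/2\<bar> else if u \<in> {a, b} then 1/2 + t
     else if v \<in> {a, b} then 3/2 - t else 3/2)"

definition fpt :: "'a \<Rightarrow> 'a \<Rightarrow> 'a point \<Rightarrow> real" where
  "fpt a b p = (case p of Vtx w \<Rightarrow> if w \<in> {a, b} then 1/2 else 3/2 | Mid x y l \<Rightarrow> fF a b x y l)"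

lemma fpt_pt: assumes "a \<noteq> b" "u \<noteq> v" "0 \<le> t" "t \<le> 1"
  shows "fpt a b (pt u v t) = fF a b u v t"
proof (cases "t = 0")
  case True then show ?thesis using assms unfolding pt_def fpt_def fF_def by (auto simp: doubleton_eq_iff)
next
  case F0: False
  show ?thesis
  proof (cases "t = 1")
    case True then show ?thesis using assms unfolding pt_def fpt_def fF_def by (auto simp: doubleton_eq_iff)
  next
    case False
    show ?thesis
    proof (cases "u < v")
      case True then show ?thesis using F0 False unfolding pt_def fpt_def by simp
    next
      case F2: False
      then have "pt u v t = Mid v u (1 - t)" using F0 False unfolding pt_def by simp
      then show ?thesis using assms unfolding fpt_def fF_def by (auto simp: doubleton_eq_iff)
    qed
  qed
qed

lemma fF_lip: "\<bar>fF a b u v l - fF a b u v m\<bar> \<le> \<bar>l - m\<bar>"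
  unfolding fF_def by (simp add: abs_if)

lemma fpt_step:
  assumes sg: "simple_graph V E" "a \<noteq> b" and st: "step_ok E p q"
  shows "fpt a b q \<le> fpt a b p + step_len E p q"
proof -
  obtain u v l m where oe: "on_edge E p q u v l m" and ne: "p \<noteq> q" using st unfolding step_ok_def by blast
  have "{u, v} \<in> E" using oe unfolding on_edge_def by simp
  then have uv: "u \<noteq> v" by (rule edge_neq[OF sg(1)])
  have "step_len E p q = \<bar>l - m\<bar>" using step_len_eq[OF sg(1) oe ne] .
  moreover have "fpt a b p = fF a b u v l" "fpt a b q = fF a b u v m"
    using oe fpt_pt[OF sg(2) uv] unfolding on_edge_def by auto
  ultimately show ?thesis using fF_lip[of a b u v m l] by auto
qed

lemma walk_bound:
  assumes sg: "simple_graph V E" "a \<noteq> b" and w: "walk E ps"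
  shows "fpt a b (last ps) \<le> fpt a b (hd ps) + wlen E ps"
proof -
  have "\<forall>i. i < length ps \<longrightarrow> fpt a b (ps ! i) \<le> fpt a b (ps ! 0) + (\<Sum>j<i. step_len E (ps ! j) (ps ! Suc j))"
  proof
    fix i show "i < length ps \<longrightarrow> fpt a b (ps ! i) \<le> fpt a b (ps ! 0) + (\<Sum>j<i. step_len E (ps ! j) (ps ! Suc j))"
    proof (induction i)
      case 0 then show ?case by simp
    next
      case (Suc i)
      show ?case
      proof
        assume "Suc i < length ps"
        then have "step_ok E (ps ! i) (ps ! Suc i)" using w unfolding walk_def by auto
        from fpt_step[OF sg this] Suc \<open>Suc i < length ps\<close> show "fpt a b (ps ! Suc i) \<le> fpt a b (ps ! 0) + (\<Sum>j<Suc i. step_len E (ps ! j) (ps ! Suc j))"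
          by simp
      qed
    qed
  qed
  moreover have ne: "ps \<noteq> []" using w unfolding walk_def by auto
  ultimately have "fpt a b (ps ! (length ps - 1)) \<le> fpt a b (ps ! 0) + (\<Sum>j<length ps - 1. step_len E (ps ! j) (ps ! Suc j))"
    by simp
  then show ?thesis using ne by (simp add: wlen_def hd_conv_nth last_conv_nth)
qed

lemma gdist_bound:
  assumes sg: "simple_graph V E" "a \<noteq> b" and w: "walk E ps" "hd ps = p" "last ps = q"
  shows "fpt a b q - fpt a b p \<le> gdist E p q"
  unfolding gdist_def
proof (rule cInf_greatest)
  show "{wlen E ps |ps. walk E ps \<and> hd ps = p \<and> last ps = q} \<noteq> {}" using w by blast
next
  fix x assume "x \<in> {wlen E ps |ps. walk E ps \<and> hd ps = p \<and> last ps = q}"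
  then obtain ps' where "x = wlen E ps'" "walk E ps'" "hd ps' = p" "last ps' = q" by blast
  then show "fpt a b q - fpt a b p \<le> x" using walk_bound[OF sg, of ps'] by simp
qed

lemma pt_points: "{u, v} \<in> E \<Longrightarrow> 0 \<le> l \<Longrightarrow> l \<le> 1 \<Longrightarrow> pt u v l \<in> points E"
  unfolding points_def by blast

lemma walk_snoc:
  assumes "walk E ps" "step_ok E (last ps) r" "r \<in> points E"
  shows "walk E (ps @ [r]) \<and> hd (ps @ [r]) = hd ps \<and> last (ps @ [r]) = r"
proof -
  have ne: "ps \<noteq> []" using assms unfolding walk_def by auto
  have "\<forall>i < length (ps @ [r]) - 1. step_ok E ((ps @ [r]) ! i) ((ps @ [r]) ! Suc i)"
  proof (intro allI impI)
    fix i assume "i < length (ps @ [r]) - 1"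
    then have i: "i < length ps" by simp
    show "step_ok E ((ps @ [r]) ! i) ((ps @ [r]) ! Suc i)"
    proof (cases "Suc i < length ps")
      case True then show ?thesis using assms(1) i unfolding walk_def by (auto simp: nth_append)
    next
      case False then have "i = length ps - 1" using i by simp
      then show ?thesis using assms(2) ne i by (simp add: nth_append last_conv_nth)
    qed
  qed
  then show ?thesis using assms ne unfolding walk_def by auto
qed

lemma walk_path:
  assumes sg: "simple_graph V E" and r: "(x, y) \<in> {(x, y). {x, y} \<in> E}\<^sup>*"
    and w: "walk E ps" "last ps = Vtx x"
  shows "\<exists>ps'. walk E ps' \<and> hd ps' = hd ps \<and> last ps' = Vtx y"
  using r
proof (induction rule: rtrancl_induct)
  case base then show ?case using w by blast
next
  case (step y z)
  then obtain ps' where ps': "walk E ps'" "hd ps' = hd ps" "last ps' = Vtx y" by blast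
  have e: "{y, z} \<in> E" using step by simp
  have "y \<noteq> z" using edge_neq[OF sg e] .
  have "on_edge E (Vtx y) (Vtx z) y z 0 1" unfolding on_edge_def pt_def using e by simp
  then have "step_ok E (last ps') (Vtx z)" using ps' \<open>y \<noteq> z\<close> unfolding step_ok_def by auto
  moreover have "Vtx z \<in> points E" using pt_points[OF e, of 1] unfolding pt_def by simp
  ultimately have "walk E (ps' @ [Vtx z]) \<and> hd (ps' @ [Vtx z]) = hd ps' \<and> last (ps' @ [Vtx z]) = Vtx z"
    by (rule walk_snoc[OF ps'(1)])
  then show ?case using ps'(2) by (intro exI[of _ "ps' @ [Vtx z]"]) simp
qed



lemma s_delta_props:
  assumes "0 < \<delta>" "\<delta> < 3/2"
  shows "0 < s_delta \<delta> \<and> s_delta \<delta> \<le> 1 \<and> s_delta \<delta> \<le> 3/2 - \<delta>"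
proof -
  define S where "S = S_delta \<delta>"
  define X where "X = {\<bar>s1 - s2\<bar> | s1 s2.
      {s1, 1 - s1} \<inter> S \<noteq> {} \<and> {s2, 1 - s2} \<inter> S \<noteq> {} \<and> s1 \<notin> {s2, 1 - s2}}"
  have sd: "s_delta \<delta> = Inf X" unfolding s_delta_def X_def S_def by simp
  define K where "K = S \<union> (\<lambda>x. 1 - x) ` S"
  have fS: "finite S" unfolding S_def S_delta_def by simp
  have "X \<subseteq> (\<lambda>(x, y). \<bar>x - y\<bar>) ` (K \<times> K)"
  proof
    fix d assume "d \<in> X"
    then obtain s1 s2 where h: "d = \<bar>s1 - s2\<bar>" "{s1, 1 - s1} \<inter> S \<noteq> {}" "{s2, 1 - s2} \<inter> S \<noteq> {}" 
      unfolding X_def by blast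
    have "s1 \<in> S \<or> 1 - s1 \<in> S" using h(2) by blast
    then have "s1 \<in> K" unfolding K_def using rev_image_eqI[of "1 - s1" S s1 "\<lambda>x. 1 - x"] by auto
    moreover
    have "s2 \<in> S \<or> 1 - s2 \<in> S" using h(3) by blast
    then have "s2 \<in> K" unfolding K_def using rev_image_eqI[of "1 - s2" S s2 "\<lambda>x. 1 - x"] by auto
    ultimately show "d \<in> (\<lambda>(x, y). \<bar>x - y\<bar>) ` (K \<times> K)" using h(1) by force
  qed
  moreover have "finite K" using fS unfolding K_def by simp
  ultimately have fX: "finite X" by (meson finite_SigmaI finite_imageI finite_subset)
  have pos: "\<And>d. d \<in> X \<Longrightarrow> 0 < d" unfolding X_def by auto
  have "\<exists>e\<in>X. e \<le> 1 \<and> e \<le> 3/2 - \<delta>"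
  proof (cases "\<delta> < 1/2")
    case True
    have fl: "\<lfloor>1/2 + \<delta>\<rfloor> = 0" using True assms by (simp add: floor_eq_iff)
    have "frac_part (1/2 + \<delta>) = 1/2 + \<delta>" unfolding frac_part_def using fl by simp
    then have "1/2 + \<delta> \<in> S" unfolding S_def S_delta_def by simp
    moreover have "(0::real) \<in> S" unfolding S_def S_delta_def by simp
    ultimately have "\<bar>0 - (1/2 + \<delta>)\<bar> \<in> X" unfolding X_def using True assms
      by (intro CollectI exI[of _ 0] exI[of _ "1/2 + \<delta>"]) auto
    then show ?thesis using True assms by (intro bexI[of _ "\<bar>0 - (1/2 + \<delta>)\<bar>"]) auto
  next
    case False
    show ?thesis
    proof (cases "\<delta> = 1/2")
      case True
      have "frac_part \<delta> = 1/2" unfolding frac_part_def using True by (simp add: floor_eq_iff)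
      then have "1/2 \<in> S" unfolding S_def S_delta_def by simp
      moreover have "(0::real) \<in> S" unfolding S_def S_delta_def by simp
      ultimately have "\<bar>0 - 1/2\<bar> \<in> X" unfolding X_def
        by (intro CollectI exI[of _ 0] exI[of _ "1/2"]) auto
      then show ?thesis using True by (intro bexI[of _ "\<bar>0 - 1/2\<bar>"]) auto
    next
      case F2: False
      have fl: "\<lfloor>1/2 + \<delta>\<rfloor> = 1" using False F2 assms by (simp add: floor_eq_iff)
      have "frac_part (1/2 + \<delta>) = \<delta> - 1/2" unfolding frac_part_def using fl by simp
      then have "1 - (3/2 - \<delta>) \<in> S" unfolding S_def S_delta_def by simp
      moreover have "(0::real) \<in> S" unfolding S_def S_delta_def by simp
      ultimately have "\<bar>0 - (3/2 - \<delta>)\<bar> \<in> X" unfolding X_def using False F2 assms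
        by (intro CollectI exI[of _ 0] exI[of _ "3/2 - \<delta>"]) auto
      then show ?thesis using False F2 assms by (intro bexI[of _ "\<bar>0 - (3/2 - \<delta>)\<bar>"]) auto
    qed
  qed
  then obtain e where e: "e \<in> X" "e \<le> 1" "e \<le> 3/2 - \<delta>" by blast
  have "Inf X \<le> e" using e(1) fX by (simp add: cInf_lower bdd_below_finite)
  moreover have "0 < Inf X"
  proof -
    have "X \<noteq> {}" using e by blast
    then have "Inf X = Min X" using fX by (simp add: cInf_eq_Min)
    moreover have "Min X \<in> X" using fX \<open>X \<noteq> {}\<close> by simp
    ultimately show ?thesis using pos by simp
  qed
  ultimately show ?thesis using sd e by simp
qed



theorem mainTheorem18:
  fixes V :: "'a::linorder set" and E :: "'a set set" and \<delta> :: real and T :: "'a point list"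
  assumes "simple_graph V E"
    and "connected_graph V E"
    and "0 < \<delta>" and "\<delta> < 3/2"
    and "shortest_delta_tour E \<delta> T"
    and "nice E T"
    and "card (set T) \<ge> 3"
  shows "\<exists>C. vertex_cover V E C \<and> real (card C) \<le> wlen E T / s_delta \<delta> + 1"
proof -
  note sg = assms(1)
  define z where "z = length T - 1"
  have ni: "tour E T" "z \<ge> 3"
    "\<forall>i \<in> {1..z}. is_vertex (T ! (i - 1)) \<or> is_vertex (T ! i)"
    "\<forall>i \<in> {1..z}. \<not> is_vertex (T ! i) \<longrightarrow> T ! (i - 1) = T ! ((i + 1) mod z)"
    using assms(6) unfolding nice_def Let_def z_def by auto
  have wk: "walk E T" "hd T = last T" using ni(1) unfolding tour_def by auto
  have Tne: "T \<noteq> []" "set T \<subseteq> points E" "\<forall>i < z. step_ok E (T ! i) (T ! Suc i)"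
    using wk(1) unfolding walk_def z_def by auto
  have lenT: "length T = Suc z" using Tne(1) ni(2) unfolding z_def by simp
  have T0z: "T ! 0 = T ! z" using wk(2) Tne(1) lenT by (simp add: hd_conv_nth last_conv_nth)
  have inset: "\<And>i. i \<le> z \<Longrightarrow> T ! i \<in> set T" using lenT by simp
  have finV: "finite V" using sg unfolding simple_graph_def by simp
  define W where "W = {w. Vtx w \<in> set T}"
  define X where "X = {x. x \<notin> W \<and> (\<exists>i\<in>{1..z}. \<exists>y \<mu>. {x, y} \<in> E \<and> 0 < \<mu> \<and> \<mu> < 1 \<and> T ! i = pt x y \<mu> \<and> \<mu> \<le> \<delta> - 1/2)}"
  define C where "C = W \<union> X"
  have WV: "W \<subseteq> V"
  proof
    fix w assume "w \<in> W"
    then have "Vtx w \<in> points E" using Tne(2) unfolding W_def by auto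
    then obtain u v l where "{u, v} \<in> E" "Vtx w = pt u v l" unfolding points_def by auto
    then show "w \<in> V" using pt_vertex[of u v l w] edge_in_V[OF sg] by metis
  qed
  have XV: "X \<subseteq> V" unfolding X_def using edge_in_V[OF sg] by blast
  have finW: "finite W" using WV finV finite_subset by blast
  have finX: "finite X" using XV finV finite_subset by blast
  have CV: "C \<subseteq> V" unfolding C_def using WV XV by blast
  have stepi: "\<And>i. i \<in> {1..z} \<Longrightarrow> step_ok E (T ! (i - 1)) (T ! i)"
    using Tne(3) by (metis Suc_pred' atLeastAtMost_iff diff_less less_le_trans zero_less_one less_eq_Suc_le lessI le_imp_less_Suc)
  define sl where "sl i = step_len E (T ! (i - 1)) (T ! i)" for i
  have sl_nonneg: "\<And>i. i \<in> {1..z} \<Longrightarrow> 0 \<le> sl i"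
  proof -
    fix i assume "i \<in> {1..z}"
    from stepi[OF this] obtain u v l m where "on_edge E (T ! (i - 1)) (T ! i) u v l m" "T ! (i - 1) \<noteq> T ! i"
      unfolding step_ok_def by blast
    then show "0 \<le> sl i" unfolding sl_def using step_len_eq[OF sg] by simp
  qed
  have wlen_eq: "wlen E T = (\<Sum>i\<in>{1..z}. sl i)"
    unfolding wlen_def sl_def z_def[symmetric] using sum.atLeast1_atMost_eq[of "\<lambda>i. step_len E (T ! (i - 1)) (T ! i)" z]
    by simp
  have Xstop: "\<And>x i y \<mu>. x \<in> X \<Longrightarrow> i \<in> {1..z} \<Longrightarrow> {x, y} \<in> E \<Longrightarrow> 0 < \<mu> \<Longrightarrow> \<mu> < 1 \<Longrightarrow> T ! i = pt x y \<mu>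
      \<Longrightarrow> \<not> is_vertex (T ! i) \<and> T ! (i - 1) = Vtx y \<and> sl i = 1 - \<mu>"
  proof -
    fix x i y \<mu> assume xX: "x \<in> X" and i: "i \<in> {1..z}" and e: "{x, y} \<in> E" and mu: "0 < \<mu>" "\<mu> < 1"
      and Ti: "T ! i = pt x y \<mu>"
    have xW: "x \<notin> W" using xX unfolding X_def by blast
    have xy: "x \<noteq> y" using edge_neq[OF sg e] .
    have niv: "\<not> is_vertex (T ! i)" using Ti mu by (simp add: pt_is_vertex)
    then have "is_vertex (T ! (i - 1))" using ni(3) i by blast
    then obtain w where w: "T ! (i - 1) = Vtx w" unfolding is_vertex_def by blast
    have "i - 1 \<le> z" using i by auto
    then have wW: "w \<in> W" using inset[of "i - 1"] w unfolding W_def by simp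
    from stepi[OF i] obtain u v l m where oe: "on_edge E (T ! (i - 1)) (T ! i) u v l m" and ne: "T ! (i - 1) \<noteq> T ! i"
      unfolding step_ok_def by blast
    have "{u, v} \<in> E" using oe unfolding on_edge_def by simp
    then have uv: "u \<noteq> v" by (rule edge_neq[OF sg])
    have slv: "sl i = \<bar>l - m\<bar>" unfolding sl_def using step_len_eq[OF sg oe ne] .
    have eqm: "pt u v m = pt x y \<mu>" using oe Ti unfolding on_edge_def by simp
    have eql: "pt u v l = Vtx w" using oe w unfolding on_edge_def by simp
    have c1: "(u = x \<and> v = y \<and> m = \<mu>) \<or> (u = y \<and> v = x \<and> m = 1 - \<mu>)"
      using pt_interior_eq[OF uv xy mu eqm] .
    have c2: "(l = 0 \<and> w = u) \<or> (l = 1 \<and> w = v)" using pt_vertex[OF eql] .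
    have "w \<noteq> x" using wW xW by blast
    have "w = y \<and> sl i = 1 - \<mu>"
    proof (cases "u = x")
      case True
      then have "v = y" "m = \<mu>" using c1 xy by auto
      moreover have "l = 1" "w = v" using c2 True \<open>w \<noteq> x\<close> by auto
      ultimately show ?thesis using slv mu by simp
    next
      case False
      then have "u = y" "v = x" "m = 1 - \<mu>" using c1 by auto
      moreover have "l = 0" "w = u" using c2 \<open>v = x\<close> \<open>w \<noteq> x\<close> by auto
      ultimately show ?thesis using slv mu by simp
    qed
    then show "\<not> is_vertex (T ! i) \<and> T ! (i - 1) = Vtx y \<and> sl i = 1 - \<mu>" using niv w by simp
  qed
  have yW: "\<And>y i. i \<in> {1..z} \<Longrightarrow> T ! (i - 1) = Vtx y \<Longrightarrow> y \<in> W"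
  proof -
    fix y i assume "i \<in> {1..z}" "T ! (i - 1) = Vtx y"
    moreover have "i - 1 \<le> z" using \<open>i \<in> {1..z}\<close> by auto
    ultimately show "y \<in> W" using inset[of "i - 1"] unfolding W_def by simp
  qed
  define P where "P x i \<longleftrightarrow> i \<in> {1..z} \<and> (\<exists>y \<mu>. {x, y} \<in> E \<and> 0 < \<mu> \<and> \<mu> < 1 \<and> T ! i = pt x y \<mu> \<and> \<mu> \<le> \<delta> - 1/2)" for x i
  define g where "g x = (SOME i. P x i)" for x
  have gP: "\<And>x. x \<in> X \<Longrightarrow> P x (g x)"
  proof -
    fix x assume "x \<in> X"
    then have "\<exists>i. P x i" unfolding X_def P_def by blast
    then show "P x (g x)" unfolding g_def by (rule someI_ex)
  qed
  have gprops: "\<And>x. x \<in> X \<Longrightarrow> g x \<in> {1..z} \<and> \<not> is_vertex (T ! g x) \<and> sl (g x) \<ge> 3/2 - \<delta>"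
  proof -
    fix x assume xX: "x \<in> X"
    from gP[OF xX] obtain y \<mu> where h: "g x \<in> {1..z}" "{x, y} \<in> E" "0 < \<mu>" "\<mu> < 1" "T ! g x = pt x y \<mu>" "\<mu> \<le> \<delta> - 1/2"
      unfolding P_def by blast
    from Xstop[OF xX h(1-5)] h show "g x \<in> {1..z} \<and> \<not> is_vertex (T ! g x) \<and> sl (g x) \<ge> 3/2 - \<delta>" by simp
  qed
  have ginj: "inj_on g X"
  proof (rule inj_onI)
    fix x x' assume xX: "x \<in> X" and xX': "x' \<in> X" and eq: "g x = g x'"
    from gP[OF xX] obtain y \<mu> where h: "g x \<in> {1..z}" "{x, y} \<in> E" "0 < \<mu>" "\<mu> < 1" "T ! g x = pt x y \<mu>"
      unfolding P_def by blast
    from gP[OF xX'] obtain y' \<mu>' where h': "g x' \<in> {1..z}" "{x', y'} \<in> E" "0 < \<mu>'" "\<mu>' < 1" "T ! g x' = pt x' y' \<mu>'"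
      unfolding P_def by blast
    have s1: "T ! (g x - 1) = Vtx y" using Xstop[OF xX h(1-5)] by simp
    have s2: "T ! (g x' - 1) = Vtx y'" using Xstop[OF xX' h'(1-5)] by simp
    have yy: "y = y'" using s1 s2 eq by simp
    have yWx: "y \<in> W" using yW[OF h(1) s1] .
    have x'W: "x' \<notin> W" using xX' unfolding X_def by blast
    have ptq: "pt x' y' \<mu>' = pt x y \<mu>" using h(5) h'(5) eq by simp
    have "(x' = x \<and> y' = y \<and> \<mu>' = \<mu>) \<or> (x' = y \<and> y' = x \<and> \<mu>' = 1 - \<mu>)"
      using pt_interior_eq[OF edge_neq[OF sg h'(2)] edge_neq[OF sg h(2)] h(3) h(4) ptq] .
    then show "x = x'" using yWx x'W by auto
  qed
  define A where "A = {i \<in> {1..z}. is_vertex (T ! (i - 1)) \<and> is_vertex (T ! i)}"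
  have finA: "finite A" unfolding A_def by simp
  have slA: "\<And>i. i \<in> A \<Longrightarrow> sl i = 1"
  proof -
    fix i assume iA: "i \<in> A"
    then have i: "i \<in> {1..z}" unfolding A_def by simp
    from stepi[OF i] obtain u v l m where oe: "on_edge E (T ! (i - 1)) (T ! i) u v l m" and ne: "T ! (i - 1) \<noteq> T ! i"
      unfolding step_ok_def by blast
    have p: "T ! (i - 1) = pt u v l" "T ! i = pt u v m" using oe unfolding on_edge_def by auto
    have "l = 0 \<or> l = 1" "m = 0 \<or> m = 1" using iA p unfolding A_def by (auto simp: pt_is_vertex)
    moreover have "l \<noteq> m" using ne p by auto
    ultimately have "\<bar>l - m\<bar> = 1" by auto
    then show "sl i = 1" unfolding sl_def using step_len_eq[OF sg oe ne] by simp
  qed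
  have XA: "g ` X \<inter> A = {}" using gprops unfolding A_def by auto
  have gXsub: "g ` X \<subseteq> {1..z}" using gprops by auto
  have s: "0 < s_delta \<delta>" "s_delta \<delta> \<le> 1" "s_delta \<delta> \<le> 3/2 - \<delta>" using s_delta_props[OF assms(3,4)] by auto
  have len_lower: "real (card A) + real (card X) * s_delta \<delta> \<le> wlen E T"
  proof -
    have f1: "(\<Sum>i\<in>A \<union> g ` X. sl i) \<le> (\<Sum>i\<in>{1..z}. sl i)"
      by (rule sum_mono2) (use gXsub sl_nonneg in \<open>auto simp: A_def\<close>)
    have f2: "(\<Sum>i\<in>A \<union> g ` X. sl i) = (\<Sum>i\<in>A. sl i) + (\<Sum>i\<in>g ` X. sl i)"
      by (rule sum.union_disjoint) (use finA finX XA in auto)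
    have f3: "(\<Sum>i\<in>A. sl i) = real (card A)" using slA by simp
    have f4: "real (card (g ` X)) * s_delta \<delta> \<le> (\<Sum>i\<in>g ` X. sl i)"
      by (rule sum_bounded_below) (use gprops s in force)
    have "card (g ` X) = card X" using card_image[OF ginj] .
    then have f5: "real (card X) * s_delta \<delta> \<le> (\<Sum>i\<in>g ` X. sl i)" using f4 by simp
    show ?thesis using f1 f2 f3 f5 wlen_eq by linarith
  qed
  have "is_vertex (T ! 0) \<or> is_vertex (T ! 1)" using ni(3) ni(2) by force
  then obtain w0 where w0: "T ! 0 = Vtx w0 \<or> (\<not> is_vertex (T ! 0) \<and> T ! 1 = Vtx w0)"
    unfolding is_vertex_def by blast
  define Q where "Q w i \<longleftrightarrow> i \<in> {1..z} \<and> T ! i = Vtx w" for w i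
  define h where "h w = (LEAST i. Q w i)" for w
  have hprops: "\<And>w. w \<in> W - {w0} \<Longrightarrow> h w \<in> A \<and> T ! h w = Vtx w"
  proof -
    fix w assume wW: "w \<in> W - {w0}"
    then have "Vtx w \<in> set T" unfolding W_def by simp
    then obtain j where j: "j < length T" "T ! j = Vtx w" by (metis in_set_conv_nth)
    have "\<exists>i. Q w i"
    proof (cases "j = 0")
      case True then show ?thesis using j T0z ni(2) unfolding Q_def by (intro exI[of _ z]) auto
    next
      case False then show ?thesis using j lenT unfolding Q_def by (intro exI[of _ j]) auto
    qed
    then have Qh: "Q w (h w)" unfolding h_def by (rule LeastI_ex)
    have minh: "\<And>k. k < h w \<Longrightarrow> \<not> Q w k" unfolding h_def by (rule not_less_Least)
    define i0 where "i0 = h w"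
    have i0: "i0 \<in> {1..z}" "T ! i0 = Vtx w" using Qh unfolding Q_def i0_def by auto
    have "is_vertex (T ! (i0 - 1))"
    proof (rule ccontr)
      assume nv: "\<not> is_vertex (T ! (i0 - 1))"
      show False
      proof (cases "i0 = 1")
        case True
        then have "\<not> is_vertex (T ! 0)" using nv by simp
        then have "T ! 1 = Vtx w0" using w0 unfolding is_vertex_def by auto
        then show False using True i0 wW by simp
      next
        case False
        then have i1: "i0 - 1 \<in> {1..z}" using i0 by auto
        have "T ! (i0 - 1 - 1) = T ! ((i0 - 1 + 1) mod z)" using ni(4) i1 nv by blast
        moreover have "T ! ((i0 - 1 + 1) mod z) = Vtx w"
        proof (cases "i0 = z")
          case True then show ?thesis using i0 T0z False by simp
        next
          case F2: False then have "i0 < z" using i0 by simp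
          then show ?thesis using i0 False by simp
        qed
        ultimately have Tw: "T ! (i0 - 2) = Vtx w" by (simp add: numeral_2_eq_2)
        show False
        proof (cases "i0 = 2")
          case True
          then have "T ! 0 = Vtx w" using Tw by simp
          then have "w = w0" using w0 unfolding is_vertex_def by auto
          then show False using wW by simp
        next
          case F3: False
          then have "Q w (i0 - 2)" using i0 False Tw unfolding Q_def by auto
          moreover have "i0 - 2 < h w" using i0 False F3 unfolding i0_def by auto
          ultimately show False using minh by blast
        qed
      qed
    qed
    moreover have "is_vertex (T ! i0)" using i0 unfolding is_vertex_def by simp
    ultimately show "h w \<in> A \<and> T ! h w = Vtx w" using i0 unfolding A_def i0_def by simp
  qed
  have hinj: "inj_on h (W - {w0})"
    by (rule inj_onI) (metis hprops point.inject(1))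
  have "card (W - {w0}) \<le> card A"
    by (rule card_inj_on_le[OF hinj _ finA]) (use hprops in auto)
  then have cardW: "card W \<le> card A + 1" using card_Diff_singleton_if[of W w0] by (auto split: if_splits)
  have TP: "\<And>q. q \<in> tour_points E T \<Longrightarrow> \<exists>j<z. \<exists>u v l m t. on_edge E (T ! j) (T ! Suc j) u v l m \<and>
      min l m \<le> t \<and> t \<le> max l m \<and> q = pt u v t"
  proof -
    fix q assume "q \<in> tour_points E T"
    then consider "q \<in> set T" | j where "j < z" "q \<in> step_cover E (T ! j) (T ! Suc j)"
      unfolding tour_points_def z_def by auto
    then show "\<exists>j<z. \<exists>u v l m t. on_edge E (T ! j) (T ! Suc j) u v l m \<and> min l m \<le> t \<and> t \<le> max l m \<and> q = pt u v t"
    proof cases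
      case 1
      then obtain j' where j': "j' < length T" "T ! j' = q" by (metis in_set_conv_nth)
      define j where "j = (if j' = z then 0 else j')"
      have j: "j < z" "T ! j = q" using j' lenT T0z ni(2) unfolding j_def by auto
      from Tne(3) j(1) obtain u v l m where "on_edge E (T ! j) (T ! Suc j) u v l m"
        unfolding step_ok_def by blast
      moreover then have "q = pt u v l" using j(2) unfolding on_edge_def by simp
      ultimately show ?thesis using j(1) by (intro exI[of _ j] conjI exI) auto
    next
      case 2
      then show ?thesis unfolding step_cover_def by blast
    qed
  qed
  have core: "\<And>j u v l m t a b. j < z \<Longrightarrow> on_edge E (T ! j) (T ! Suc j) u v l m \<Longrightarrow> min l m \<le> t \<Longrightarrow> t \<le> max l m
      \<Longrightarrow> u \<notin> W \<Longrightarrow> 1/2 + t \<le> \<delta> \<Longrightarrow> u \<in> X"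
  proof -
    fix j u v l m t a b assume j: "j < z" and oe: "on_edge E (T ! j) (T ! Suc j) u v l m"
      and t: "min l m \<le> t" "t \<le> max l m" and uW: "u \<notin> W" and td: "1/2 + t \<le> \<delta>"
    have e: "{u, v} \<in> E" using oe unfolding on_edge_def by simp
    then have uv: "u \<noteq> v" by (rule edge_neq[OF sg])
    have p: "T ! j = pt u v l" "T ! Suc j = pt u v m" "0 \<le> l" "l \<le> 1" "0 \<le> m" "m \<le> 1"
      using oe unfolding on_edge_def by auto
    have ne: "T ! j \<noteq> T ! Suc j" using Tne(3) j unfolding step_ok_def by blast
    have sj: "Suc j \<in> {1..z}" using j by auto
    have "is_vertex (T ! (Suc j - 1)) \<or> is_vertex (T ! Suc j)" using ni(3) sj by blast
    then have av: "is_vertex (T ! j) \<or> is_vertex (T ! Suc j)" by simp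
    have jW: "T ! j \<in> set T" "T ! Suc j \<in> set T" using inset j by auto
    have l1: "is_vertex (T ! j) \<Longrightarrow> l = 1"
    proof -
      assume "is_vertex (T ! j)"
      then have "l = 0 \<or> l = 1" using p by (simp add: pt_is_vertex)
      moreover have "l \<noteq> 0" using p(1) jW(1) uW unfolding W_def pt_def by auto
      ultimately show "l = 1" by simp
    qed
    have m1: "is_vertex (T ! Suc j) \<Longrightarrow> m = 1"
    proof -
      assume "is_vertex (T ! Suc j)"
      then have "m = 0 \<or> m = 1" using p by (simp add: pt_is_vertex)
      moreover have "m \<noteq> 0" using p(2) jW(2) uW unfolding W_def pt_def by auto
      ultimately show "m = 1" by simp
    qed
    show "u \<in> X"
    proof (cases "is_vertex (T ! j)")
      case True
      then have "l = 1" using l1 by simp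
      then have nv: "\<not> is_vertex (T ! Suc j)" using m1 ne p by auto
      then have m: "0 < m" "m < 1" using p by (auto simp: pt_is_vertex)
      have "m \<le> \<delta> - 1/2" using t td \<open>l = 1\<close> m by (auto simp: min_def split: if_splits)
      then have "\<exists>i\<in>{1..z}. \<exists>y \<mu>. {u, y} \<in> E \<and> 0 < \<mu> \<and> \<mu> < 1 \<and> T ! i = pt u y \<mu> \<and> \<mu> \<le> \<delta> - 1/2"
        using sj e m p(2) by (intro bexI[of _ "Suc j"] exI[of _ v] exI[of _ m]) auto
      then show ?thesis using uW unfolding X_def by simp
    next
      case False
      then have nvm: "is_vertex (T ! Suc j)" using av by simp
      then have "m = 1" using m1 by simp
      have l: "0 < l" "l < 1" using p False by (auto simp: pt_is_vertex)
      have "l \<le> \<delta> - 1/2" using t td \<open>m = 1\<close> l by (auto simp: min_def split: if_splits)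
      define i where "i = (if j = 0 then z else j)"
      have ii: "i \<in> {1..z}" "T ! i = T ! j" using j ni(2) T0z unfolding i_def by auto
      have "\<exists>i\<in>{1..z}. \<exists>y \<mu>. {u, y} \<in> E \<and> 0 < \<mu> \<and> \<mu> < 1 \<and> T ! i = pt u y \<mu> \<and> \<mu> \<le> \<delta> - 1/2"
        using ii e l p(1) \<open>l \<le> \<delta> - 1/2\<close> by (intro bexI[of _ i] exI[of _ v] exI[of _ l]) auto
      then show ?thesis using uW unfolding X_def by simp
    qed
  qed
  have dt: "\<forall>p \<in> points E. \<exists>q \<in> tour_points E T. gdist E p q \<le> \<delta>"
    using assms(5) unfolding shortest_delta_tour_def delta_tour_def by blast
  have conn: "\<forall>u\<in>V. \<forall>v\<in>V. (u, v) \<in> {(x, y). {x, y} \<in> E}\<^sup>*"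
    using assms(2) unfolding connected_graph_def by blast
  have cover: "\<And>a b. {a, b} \<in> E \<Longrightarrow> a \<notin> W \<Longrightarrow> b \<notin> W \<Longrightarrow> a \<in> X \<or> b \<in> X"
  proof -
    fix a b assume e: "{a, b} \<in> E" and aW: "a \<notin> W" and bW: "b \<notin> W"
    have ab: "a \<noteq> b" using edge_neq[OF sg e] .
    define M where "M = pt a b (1/2)"
    have MP: "M \<in> points E" unfolding M_def using pt_points[OF e] by simp
    then obtain q where q: "q \<in> tour_points E T" "gdist E M q \<le> \<delta>" using dt by blast
    from TP[OF q(1)] obtain j u v l m t where j: "j < z" and oe: "on_edge E (T ! j) (T ! Suc j) u v l m"
      and t: "min l m \<le> t" "t \<le> max l m" and qq: "q = pt u v t" by blast
    have euv: "{u, v} \<in> E" using oe unfolding on_edge_def by simp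
    then have uv: "u \<noteq> v" by (rule edge_neq[OF sg])
    have p: "T ! j = pt u v l" "T ! Suc j = pt u v m" "0 \<le> l" "l \<le> 1" "0 \<le> m" "m \<le> 1"
      using oe unfolding on_edge_def by auto
    have t01: "0 \<le> t" "t \<le> 1" using t p by auto
    have aV: "a \<in> V" using edge_in_V[OF sg e] by simp
    have uV: "u \<in> V" using edge_in_V[OF sg euv] by simp
    have w1: "walk E [M]" using MP unfolding walk_def by simp
    have "on_edge E M (Vtx a) a b (1/2) 0" unfolding on_edge_def M_def using e by (simp add: pt_def)
    moreover have "M \<noteq> Vtx a" unfolding M_def pt_def by auto
    ultimately have "step_ok E (last [M]) (Vtx a)" unfolding step_ok_def by auto
    moreover have "Vtx a \<in> points E" using pt_points[OF e, of 0] by (simp add: pt_def)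
    ultimately have w2: "walk E [M, Vtx a]" using walk_snoc[OF w1] by simp
    have r: "(a, u) \<in> {(x, y). {x, y} \<in> E}\<^sup>*" using conn aV uV by blast
    have "last [M, Vtx a] = Vtx a" by simp
    from walk_path[OF sg r w2 this] obtain ps where ps0: "walk E ps" "hd ps = hd [M, Vtx a]" "last ps = Vtx u"
      by blast
    then have ps: "walk E ps" "hd ps = M" "last ps = Vtx u" by auto
    have "\<exists>ps'. walk E ps' \<and> hd ps' = M \<and> last ps' = q"
    proof (cases "q = Vtx u")
      case True then show ?thesis using ps by blast
    next
      case False
      have "on_edge E (Vtx u) q u v 0 t" unfolding on_edge_def qq using euv t01 by (simp add: pt_def)
      then have "step_ok E (last ps) q" using False ps(3) unfolding step_ok_def by auto
      moreover have "q \<in> points E" unfolding qq using pt_points[OF euv t01] .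
      ultimately have "walk E (ps @ [q]) \<and> hd (ps @ [q]) = hd ps \<and> last (ps @ [q]) = q"
        by (rule walk_snoc[OF ps(1)])
      then show ?thesis using ps(2) by (intro exI[of _ "ps @ [q]"]) simp
    qed
    then obtain ps' where ps': "walk E ps'" "hd ps' = M" "last ps' = q" by blast
    have "fpt a b q - fpt a b M \<le> gdist E M q" by (rule gdist_bound[OF sg ab ps'])
    moreover have "fpt a b M = 0" unfolding M_def using fpt_pt[OF ab ab, of "1/2"] by (simp add: fF_def)
    moreover have "fpt a b q = fF a b u v t" unfolding qq using fpt_pt[OF ab uv t01] .
    ultimately have fq: "fF a b u v t \<le> \<delta>" using q(2) by simp
    have sj: "Suc j \<in> {1..z}" using j by auto
    have "is_vertex (T ! (Suc j - 1)) \<or> is_vertex (T ! Suc j)" using ni(3) sj by blast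
    then have av: "is_vertex (T ! j) \<or> is_vertex (T ! Suc j)" by simp
    have jW: "T ! j \<in> set T" "T ! Suc j \<in> set T" using inset j by auto
    have "u \<in> W \<or> v \<in> W"
    proof (cases "is_vertex (T ! j)")
      case True
      then obtain w where w: "T ! j = Vtx w" unfolding is_vertex_def by blast
      then have "w \<in> W" using jW unfolding W_def by simp
      moreover have "w = u \<or> w = v" using pt_vertex[of u v l w] p(1) w by auto
      ultimately show ?thesis by blast
    next
      case False
      then obtain w where w: "T ! Suc j = Vtx w" using av unfolding is_vertex_def by blast
      then have "w \<in> W" using jW unfolding W_def by simp
      moreover have "w = u \<or> w = v" using pt_vertex[of u v m w] p(2) w by auto
      ultimately show ?thesis by blast
    qed
    then have nab: "{u, v} \<noteq> {a, b}" using aW bW by auto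
    show "a \<in> X \<or> b \<in> X"
    proof (cases "u \<in> {a, b}")
      case True
      then have "v \<notin> {a, b}" using nab uv ab by auto
      then have "1/2 + t \<le> \<delta>" using fq True nab unfolding fF_def by simp
      moreover have "u \<notin> W" using True aW bW by auto
      ultimately have "u \<in> X" using core[OF j oe t] by blast
      then show ?thesis using True by auto
    next
      case False
      then have vab: "v \<in> {a, b}" using fq assms(4) nab unfolding fF_def by (auto split: if_splits)
      then have "3/2 - t \<le> \<delta>" using fq False nab unfolding fF_def by simp
      then have "1/2 + (1 - t) \<le> \<delta>" by simp
      moreover have "v \<notin> W" using vab aW bW by auto
      moreover have oe': "on_edge E (T ! j) (T ! Suc j) v u (1 - l) (1 - m)" using on_edge_swap[OF oe uv] .
      moreover have "min (1 - l) (1 - m) \<le> 1 - t" "1 - t \<le> max (1 - l) (1 - m)" using t by auto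
      ultimately have "v \<in> X" using core[OF j] by blast
      then show ?thesis using vab by auto
    qed
  qed
  have vc: "vertex_cover V E C"
    unfolding vertex_cover_def
  proof
    show "C \<subseteq> V" using CV .
    show "\<forall>e\<in>E. e \<inter> C \<noteq> {}"
    proof
      fix e assume eE: "e \<in> E"
      then obtain a b where ab: "e = {a, b}" using sg unfolding simple_graph_def by blast
      show "e \<inter> C \<noteq> {}"
      proof (cases "a \<in> W \<or> b \<in> W")
        case True then show ?thesis unfolding ab C_def by auto
      next
        case False then have "a \<in> X \<or> b \<in> X" using cover eE ab by blast
        then show ?thesis unfolding ab C_def by auto
      qed
    qed
  qed
  have cC: "card C \<le> card W + card X" unfolding C_def by (rule card_Un_le)
  have "real (card C) \<le> real (card A) + real (card X) + 1" using cC cardW by linarith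
  moreover have "real (card A) + real (card X) \<le> wlen E T / s_delta \<delta>"
  proof -
    have "real (card A) \<le> real (card A) / s_delta \<delta>" using s by (simp add: le_divide_eq mult_left_le)
    moreover have "(real (card A) + real (card X) * s_delta \<delta>) / s_delta \<delta> = real (card A) / s_delta \<delta> + real (card X)"
      using s by (simp add: field_simps)
    moreover have "(real (card A) + real (card X) * s_delta \<delta>) / s_delta \<delta> \<le> wlen E T / s_delta \<delta>"
      using len_lower s by (simp add: divide_right_mono)
    ultimately show ?thesis by linarith
  qed
  ultimately show ?thesis using vc by (intro exI[of _ C]) simp
qed

end
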